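(* Let $k\ge 1$ and let $F(x)=\sum_{i=1}^k\alpha_i\,\sigma\!\left(\frac{x-\mu_i}{s_i}\right)$ be the cdf of a $k$-component mixture of logistics distribution, where $\sigma(t)=1/(1+e^{-t})$, $\alpha_i>0$ with $\sum_i\alpha_i=1$, $\mu_i\in\mathbb{R}$, $s_i>0$. Then there exist parameters $\theta$ of a two-layer PNN with hidden dimension $k$ such that, writing $N^{[A,B]}_\theta$ for the normalized PNN cdf with support bounds $[A,B]$, $$\sup_{x\in[A,B]}\bigl|N^{[A,B]}_\theta(x)-F(x)\bigr|\longrightarrow 0\quad\text{as } A\to-\infty,\ B\to\infty.$$
   Context: Let $\sigma(t)=1/(1+e^{-t})$. A two-layer PNN with hidden dimension $k$ is the function $F_\theta(x)=\sum_{i=1}^k\beta_i\,\sigma(w_i x+c_i)$ of $x\in\mathbb{R}$, with parameters $\theta$ consisting of $w_i>0$, $c_i\in\mathbb{R}$, and a probability vector $(\beta_1,\dots,\beta_k)$ with all $\beta_i>0$ (in the paper the positivity constraints are enforced by reparametrizing $w_i=e^{-A_i}$, $c_i=-e^{-A_i}b_i$ and $\beta=\mathrm{softmax}(\cdot)$). Given support bounds $A<B$, the normalized PNN cdf is $N^{[A,B]}_\theta(x)=\frac{F_\theta(x)-F_\theta(A)}{F_\theta(B)-F_\theta(A)}$ for $x\in[A,B]$. *)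

theory Defs
  imports "HOL-Analysis.Analysis"
begin

definition sigmoid :: "real \<Rightarrow> real" where
  "sigmoid t = 1 / (1 + exp (- t))"

definition mix_logistic_cdf :: "nat \<Rightarrow> (nat \<Rightarrow> real) \<Rightarrow> (nat \<Rightarrow> real) \<Rightarrow> (nat \<Rightarrow> real) \<Rightarrow> real \<Rightarrow> real" where
  "mix_logistic_cdf k \<alpha> \<mu> s x = (\<Sum>i<k. \<alpha> i * sigmoid ((x - \<mu> i) / s i))"

definition pnn :: "nat \<Rightarrow> (nat \<Rightarrow> real) \<Rightarrow> (nat \<Rightarrow> real) \<Rightarrow> (nat \<Rightarrow> real) \<Rightarrow> real \<Rightarrow> real" where
  "pnn k w c \<beta> x = (\<Sum>i<k. \<beta> i * sigmoid (w i * x + c i))"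

definition pnn_norm :: "nat \<Rightarrow> (nat \<Rightarrow> real) \<Rightarrow> (nat \<Rightarrow> real) \<Rightarrow> (nat \<Rightarrow> real) \<Rightarrow> real \<Rightarrow> real \<Rightarrow> real \<Rightarrow> real" where
  "pnn_norm k w c \<beta> A B x = (pnn k w c \<beta> x - pnn k w c \<beta> A) / (pnn k w c \<beta> B - pnn k w c \<beta> A)"

end

theory Submission
  imports Defs "HOL-Real_Asymp.Real_Asymp"
begin

lemma sig_bot: "(sigmoid \<longlongrightarrow> 0) at_bot" unfolding sigmoid_def by real_asymp
lemma sig_top: "(sigmoid \<longlongrightarrow> 1) at_top" unfolding sigmoid_def by real_asymp
lemma sig_pos: "0 < sigmoid t" unfolding sigmoid_def by (simp add: add_pos_pos)
lemma sig_le1: "sigmoid t \<le> 1"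
proof -
  have "1 \<le> 1 + exp (- t)" by simp
  then show ?thesis unfolding sigmoid_def by (simp add: divide_le_eq_1 add_pos_pos)
qed

lemma aff_bot: assumes "(s::real) > 0" shows "filterlim (\<lambda>x. (x - m) / s) at_bot at_bot"
  using assms by real_asymp
lemma aff_top: assumes "(s::real) > 0" shows "filterlim (\<lambda>x. (x - m) / s) at_top at_top"
  using assms by real_asymp

theorem lemma4:
  fixes k :: nat and \<alpha> \<mu> s :: "nat \<Rightarrow> real"
  assumes "k \<ge> 1"
    and "\<forall>i<k. \<alpha> i > 0" and "(\<Sum>i<k. \<alpha> i) = 1"
    and "\<forall>i<k. s i > 0"
  shows "\<exists>w c \<beta> :: nat \<Rightarrow> real.
           (\<forall>i<k. w i > 0) \<and> (\<forall>i<k. \<beta> i > 0) \<and> (\<Sum>i<k. \<beta> i) = 1 \<and>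
           ((\<lambda>(A, B). SUP x\<in>{A..B}. \<bar>pnn_norm k w c \<beta> A B x - mix_logistic_cdf k \<alpha> \<mu> s x\<bar>)
              \<longlongrightarrow> 0) (at_bot \<times>\<^sub>F at_top)"
proof (intro exI conjI)
  define w where "w = (\<lambda>i. 1 / s i)"
  define c where "c = (\<lambda>i. - \<mu> i / s i)"
  let ?F = "mix_logistic_cdf k \<alpha> \<mu> s"
  show "\<forall>i<k. w i > 0" using assms(4) by (simp add: w_def)
  show "\<forall>i<k. \<alpha> i > 0" by fact
  show "(\<Sum>i<k. \<alpha> i) = 1" by fact
  have pF: "pnn k w c \<alpha> x = ?F x" for x
    unfolding pnn_def mix_logistic_cdf_def
  proof (rule sum.cong)
    fix i assume "i \<in> {..<k}"
    then have "s i > 0" using assms(4) by auto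
    then have "w i * x + c i = (x - \<mu> i) / s i" by (simp add: w_def c_def field_simps)
    then show "\<alpha> i * sigmoid (w i * x + c i) = \<alpha> i * sigmoid ((x - \<mu> i) / s i)" by simp
  qed simp
  have F0: "0 \<le> ?F x" for x
    unfolding mix_logistic_cdf_def using assms(2) sig_pos
    by (intro sum_nonneg) (simp add: less_imp_le)
  have F1: "?F x \<le> 1" for x
  proof -
    have "?F x \<le> (\<Sum>i<k. \<alpha> i)" unfolding mix_logistic_cdf_def
      using assms(2) sig_le1 by (intro sum_mono) (simp add: mult_left_le)
    then show ?thesis using assms(3) by simp
  qed
  have Fbot: "(?F \<longlongrightarrow> 0) at_bot"
  proof -
    have "((\<lambda>x. \<Sum>i<k. \<alpha> i * sigmoid ((x - \<mu> i) / s i)) \<longlongrightarrow> (\<Sum>i<k. \<alpha> i * 0)) at_bot"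
    proof (intro tendsto_sum tendsto_mult tendsto_const)
      fix i assume "i \<in> {..<k}"
      then have "s i > 0" using assms(4) by auto
      then show "((\<lambda>x. sigmoid ((x - \<mu> i) / s i)) \<longlongrightarrow> 0) at_bot"
        using filterlim_compose[OF sig_bot aff_bot] by blast
    qed
    then show ?thesis unfolding mix_logistic_cdf_def by simp
  qed
  have Ftop: "(?F \<longlongrightarrow> 1) at_top"
  proof -
    have "((\<lambda>x. \<Sum>i<k. \<alpha> i * sigmoid ((x - \<mu> i) / s i)) \<longlongrightarrow> (\<Sum>i<k. \<alpha> i * 1)) at_top"
    proof (intro tendsto_sum tendsto_mult tendsto_const)
      fix i assume "i \<in> {..<k}"
      then have "s i > 0" using assms(4) by auto
      then show "((\<lambda>x. sigmoid ((x - \<mu> i) / s i)) \<longlongrightarrow> 1) at_top"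
        using filterlim_compose[OF sig_top aff_top] by blast
    qed
    then show ?thesis unfolding mix_logistic_cdf_def using assms(3) by simp
  qed
  let ?P = "at_bot \<times>\<^sub>F at_top :: (real \<times> real) filter"
  have fstl: "filterlim fst at_bot ?P" by (rule filterlim_fst)
  have sndl: "filterlim snd at_top ?P" by (rule filterlim_snd)
  have FA: "((\<lambda>p. ?F (fst p)) \<longlongrightarrow> 0) ?P" using filterlim_compose[OF Fbot fstl] .
  have FB: "((\<lambda>p. ?F (snd p)) \<longlongrightarrow> 1) ?P" using filterlim_compose[OF Ftop sndl] .
  define g where "g = (\<lambda>p. (\<bar>1 - (?F (snd p) - ?F (fst p))\<bar> + ?F (fst p)) / (?F (snd p) - ?F (fst p)))"
  have gl: "(g \<longlongrightarrow> 0) ?P"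
  proof -
    have "(g \<longlongrightarrow> (\<bar>1 - (1 - 0)\<bar> + 0) / (1 - 0)) ?P"
      unfolding g_def by (intro tendsto_intros FA FB) simp
    then show ?thesis by simp
  qed
  have e1: "eventually (\<lambda>p. ?F (fst p) < 1/4) ?P" using order_tendstoD(2)[OF FA, of "1/4"] by simp
  have e2: "eventually (\<lambda>p. ?F (snd p) > 3/4) ?P" using order_tendstoD(1)[OF FB, of "3/4"] by simp
  have e3: "eventually (\<lambda>p. fst p \<le> 0) ?P" using filterlim_at_bot fstl by blast
  have e4: "eventually (\<lambda>p. snd p \<ge> 0) ?P" using filterlim_at_top sndl by blast
  let ?S = "\<lambda>(A, B). SUP x\<in>{A..B}. \<bar>pnn_norm k w c \<alpha> A B x - ?F x\<bar>"
  have ev: "eventually (\<lambda>p. 0 \<le> ?S p \<and> ?S p \<le> g p) ?P"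
    using e1 e2 e3 e4
  proof eventually_elim
    case (elim p)
    obtain A B where p: "p = (A, B)" by (cases p)
    let ?D = "?F B - ?F A"
    have AB: "A \<le> B" using elim p by simp
    have D: "?D > 1/2" using elim p by simp
    have bnd: "\<bar>pnn_norm k w c \<alpha> A B x - ?F x\<bar> \<le> g p" for x
    proof -
      have "pnn_norm k w c \<alpha> A B x - ?F x = (?F x * (1 - ?D) - ?F A) / ?D"
        unfolding pnn_norm_def pF using D by (simp add: field_simps)
      then have "\<bar>pnn_norm k w c \<alpha> A B x - ?F x\<bar> = \<bar>?F x * (1 - ?D) - ?F A\<bar> / ?D"
        using D by simp
      also have "\<dots> \<le> (\<bar>1 - ?D\<bar> + ?F A) / ?D"
      proof (rule divide_right_mono)
        have "\<bar>?F x * (1 - ?D)\<bar> \<le> \<bar>1 - ?D\<bar>"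
          using F0[of x] F1[of x] by (simp add: abs_mult mult_left_le_one_le)
        then show "\<bar>?F x * (1 - ?D) - ?F A\<bar> \<le> \<bar>1 - ?D\<bar> + ?F A"
          using F0[of A] by linarith
      qed (use D in simp)
      finally show ?thesis by (simp add: g_def p)
    qed
    have ne: "{A..B} \<noteq> {}" using AB by simp
    have bdd: "bdd_above ((\<lambda>x. \<bar>pnn_norm k w c \<alpha> A B x - ?F x\<bar>) ` {A..B})"
      using bnd by (intro bdd_aboveI2) blast
    have "?S p \<le> g p" unfolding p using bnd ne by (simp add: cSUP_least p)
    moreover have "0 \<le> ?S p"
    proof -
      have "\<bar>pnn_norm k w c \<alpha> A B A - ?F A\<bar> \<le> (SUP x\<in>{A..B}. \<bar>pnn_norm k w c \<alpha> A B x - ?F x\<bar>)"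
        using AB bdd by (intro cSUP_upper) auto
      then show ?thesis unfolding p by simp
    qed
    ultimately show ?case by simp
  qed
  show "(?S \<longlongrightarrow> 0) ?P"
    by (rule tendsto_sandwich[OF _ _ tendsto_const gl]) (use ev in \<open>auto elim: eventually_mono\<close>)
qed

end
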